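(* Let $0\le x<1$, $0<\beta<1$ and $\frac{(1+\beta)^2x}{4\beta}>1$. Then $$\lim_{t\to\infty}\frac{\beta}{(1+\beta)\sqrt{1-x}}\left({}_2F_1\!\left(\begin{matrix}1,(1+\beta)t\\ t+1\end{matrix};\tfrac12-\tfrac12\sqrt{1-x}\right)-{}_2F_1\!\left(\begin{matrix}1,(1+\beta)t\\ t+1\end{matrix};\tfrac12+\tfrac12\sqrt{1-x}\right)\right)=-\frac{1}{\frac{(1+\beta)^2}{4\beta}x-1},$$ uniformly on compact subsets of this region.
   Context: ${}_2F_1\!\left(\begin{matrix}a,b\\ d\end{matrix};x\right)=\sum_{n\ge0}\frac{(a)_n(b)_n}{(d)_n}\frac{x^n}{n!}$ for $|x|<1$, with $(q)_0=1$, $(q)_n=q(q+1)\cdots(q+n-1)$; $t>0$ is a real parameter tending to $\infty$. *)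

theory Defs
  imports "HOL-Analysis.Analysis"
begin

definition hyp2F1 :: "real \<Rightarrow> real \<Rightarrow> real \<Rightarrow> real \<Rightarrow> real" where
  "hyp2F1 a b d x =
     (\<Sum>n. pochhammer a n * pochhammer b n / pochhammer d n * x ^ n / fact n)"

end

theory Submission imports Defs begin

lemma summ_poly:
  fixes q :: real assumes "0 \<le> q" "q < 1"
  shows "summable (\<lambda>n. real (Suc n) * real (Suc (Suc n)) * q ^ n)"
proof -
  have s1: "summable (\<lambda>n. diffs (\<lambda>_. 1::real) n * y ^ n)" if "norm y < 1" for y :: real
    using termdiff_converges[of y 1 "\<lambda>_. 1"] that summable_geometric[of y] by auto
  have "summable (\<lambda>n. diffs (diffs (\<lambda>_. 1::real)) n * q ^ n)"
    using termdiff_converges[of q 1 "diffs (\<lambda>_. 1)"] s1 assms by auto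
  moreover have "diffs (diffs (\<lambda>_. 1::real)) n = real (Suc n) * real (Suc (Suc n))" for n
    by (simp add: diffs_def)
  ultimately show ?thesis by simp
qed

definition cc :: "real \<Rightarrow> real \<Rightarrow> nat \<Rightarrow> real" where
  "cc b t n = pochhammer (b * t) n / pochhammer (t + 1) n"

lemma cc_Suc:
  assumes "t > 0"
  shows "cc b t (Suc n) = cc b t n * ((b*t + n) / (t + 1 + n))"
proof -
  have "pochhammer (t+1) n > 0" using assms by (intro pochhammer_pos) simp
  moreover have "t + 1 + n > 0" using assms by simp
  ultimately show ?thesis unfolding cc_def pochhammer_Suc by (simp add: field_simps)
qed

lemma cc_bounds:
  assumes "t > 0" "b \<ge> 1"
  shows "0 \<le> cc b t n \<and> cc b t n \<le> b ^ n \<and> b ^ n - cc b t n \<le> b ^ n * (real n * (n + 1) / (2 * t))"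
proof (induction n)
  case 0
  then show ?case by (simp add: cc_def)
next
  case (Suc n)
  define r where "r = (b*t + n) / (t + 1 + n)"
  have den: "t + 1 + n > 0" using assms by simp
  have r0: "0 \<le> r" unfolding r_def using assms by simp
  have rb: "r \<le> b" unfolding r_def using assms den mult_right_mono[of 1 b "real n"] by (simp add: field_simps)
  have br: "b - r \<le> b * (n + 1) / t"
  proof -
    have "b - r = (b + (b - 1) * n) / (t + 1 + n)" unfolding r_def using den by (simp add: field_simps)
    also have "\<dots> \<le> (b * (n+1)) / (t + 1 + n)" using assms den
      by (intro divide_right_mono) (auto simp: algebra_simps)
    also have "\<dots> \<le> b * (n + 1) / t" using assms
      by (intro divide_left_mono) auto
    finally show ?thesis .
  qed
  have eq: "cc b t (Suc n) = cc b t n * r" unfolding r_def using cc_Suc[OF assms(1)] by simp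
  have c0: "0 \<le> cc b t n" and cb: "cc b t n \<le> b^n"
    and cd: "b ^ n - cc b t n \<le> b ^ n * (real n * (n + 1) / (2 * t))" using Suc by auto
  have "0 \<le> cc b t (Suc n)" using eq c0 r0 by simp
  moreover have "cc b t (Suc n) \<le> b ^ Suc n" using eq c0 r0 cb rb
    by (simp add: mult_mono mult.commute)
  moreover have "b ^ Suc n - cc b t (Suc n) \<le> b ^ Suc n * (real (Suc n) * (Suc n + 1) / (2 * t))"
  proof -
    have "b ^ Suc n - cc b t (Suc n) = b * (b^n - cc b t n) + cc b t n * (b - r)"
      using eq by (simp add: algebra_simps)
    also have "\<dots> \<le> b * (b ^ n * (real n * (n + 1) / (2 * t))) + b^n * (b * (n + 1) / t)"
      apply (intro add_mono mult_left_mono mult_mono cd cb br)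
      using assms c0 rb by auto
    also have "\<dots> = b ^ Suc n * (real (Suc n) * (Suc n + 1) / (2 * t))"
      using assms by (simp add: field_simps)
    finally show ?thesis .
  qed
  ultimately show ?case by simp
qed

definition SS :: "real \<Rightarrow> real" where
  "SS q = (\<Sum>n. real (Suc n) * real (Suc (Suc n)) * q ^ n)"

lemma F_bound:
  assumes t: "t > 0" and b: "b \<ge> 1" and z: "z \<ge> 0" and bz: "b * z \<le> q" and q: "q < 1"
  shows "\<bar>hyp2F1 1 (b*t) (t+1) z - 1 / (1 - b*z)\<bar> \<le> SS q / t"
proof -
  define w where "w = b * z"
  have w0: "0 \<le> w" using b z unfolding w_def by simp
  have w1: "w < 1" using bz q unfolding w_def by simp
  have q0: "0 \<le> q" using w0 bz w_def by simp
  define f where "f n = cc b t n * z ^ n" for n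
  define g where "g n = w ^ n" for n
  define h where "h n = real (Suc n) * real (Suc (Suc n)) * q ^ n / t" for n
  have hyp: "hyp2F1 1 (b*t) (t+1) z = suminf f"
  proof -
    have "pochhammer 1 n * pochhammer (b*t) n / pochhammer (t+1) n * z ^ n / fact n = f n" for n
      unfolding f_def cc_def pochhammer_fact[symmetric] by simp
    then show ?thesis unfolding hyp2F1_def by simp
  qed
  have fg: "0 \<le> f n \<and> f n \<le> g n" for n
    using cc_bounds[OF t b, of n] z unfolding f_def g_def w_def
    by (auto simp: power_mult_distrib intro: mult_right_mono)
  have gh: "g n - f n \<le> h n" for n
  proof -
    have "g n - f n = (b ^ n - cc b t n) * z ^ n" unfolding f_def g_def w_def
      by (simp add: power_mult_distrib algebra_simps)
    also have "\<dots> \<le> b ^ n * (real n * (n + 1) / (2 * t)) * z ^ n"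
      using cc_bounds[OF t b, of n] z by (intro mult_right_mono) auto
    also have "\<dots> = w ^ n * (real n * (n + 1) / (2 * t))" unfolding w_def
      by (simp add: power_mult_distrib)
    also have "\<dots> \<le> q ^ n * (real (Suc n) * real (Suc (Suc n)) / t)"
    proof -
      have 1: "w ^ n \<le> q ^ n" using w0 bz w_def by (intro power_mono) auto
      have 2: "real n * (real n + 1) / (2 * t) \<le> real (Suc n) * real (Suc (Suc n)) / t"
        using t by (simp add: field_simps)
      show ?thesis using mult_mono[OF 1 2] q0 t by (simp add: add.commute)
    qed
    also have "\<dots> = h n" unfolding h_def by simp
    finally show ?thesis .
  qed
  have sg: "summable g" unfolding g_def using w0 w1 by (intro summable_geometric) simp
  have sf: "summable f" using fg by (intro summable_comparison_test[OF _ sg]) auto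
  have sh: "summable h" unfolding h_def using summ_poly[OF q0 q] by (intro summable_divide)
  have sd: "summable (\<lambda>n. g n - f n)" using sg sf by (rule summable_diff)
  have "1 / (1 - b*z) = suminf g" unfolding g_def w_def[symmetric]
    using suminf_geometric[of w] w0 w1 by (simp add: divide_inverse)
  then have "1 / (1 - b*z) - hyp2F1 1 (b*t) (t+1) z = (\<Sum>n. g n - f n)"
    using hyp suminf_diff[OF sg sf] by simp
  moreover have "(\<Sum>n. g n - f n) \<ge> 0" using fg by (intro suminf_nonneg sd) auto
  moreover have "(\<Sum>n. g n - f n) \<le> suminf h" using gh by (intro suminf_le sd sh) auto
  moreover have "suminf h = SS q / t" unfolding h_def SS_def
    using summ_poly[OF q0 q] by (simp add: suminf_divide)
  ultimately show ?thesis by simp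
qed

lemma compact_bound:
  fixes f :: "'a::topological_space \<Rightarrow> real"
  assumes "compact K" "continuous_on K f" "\<And>p. p \<in> K \<Longrightarrow> f p < 1"
  shows "\<exists>q<1. \<forall>p\<in>K. f p \<le> q"
proof (cases "K = {}")
  case True then show ?thesis by (intro exI[of _ 0]) auto
next
  case False
  have "compact (f ` K)" using assms by (intro compact_continuous_image)
  then obtain m where "m \<in> f ` K" "\<forall>y\<in>f ` K. y \<le> m"
    using compact_attains_sup[of "f ` K"] False by blast
  then show ?thesis using assms(3) by auto
qed

lemma zp_lt:
  fixes x \<beta> :: real
  assumes "0 \<le> x" "x < 1" "0 < \<beta>" "\<beta> < 1" "(1 + \<beta>)^2 * x / (4 * \<beta>) > 1"
  shows "(1 + \<beta>) * (1/2 + 1/2 * sqrt (1 - x)) < 1"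
proof -
  define s where "s = sqrt (1 - x)"
  have s2: "s^2 = 1 - x" unfolding s_def using assms by simp
  define u where "u = 1 - (1 + \<beta>) * (1/2 - 1/2 * s)"
  define v where "v = 1 - (1 + \<beta>) * (1/2 + 1/2 * s)"
  have xs: "x = 1 - s * s" using s2 by (simp add: power2_eq_square)
  have "u * v = 1 - (1 + \<beta>) + (1 + \<beta>)^2 * x / 4" unfolding u_def v_def xs
    by (simp add: field_simps power2_eq_square) algebra?
  moreover have "(1 + \<beta>)^2 * x > 4 * \<beta>" using assms by (simp add: field_simps)
  ultimately have uv: "u * v > 0" by simp
  have "u + v > 0" unfolding u_def v_def using assms by (simp add: algebra_simps)
  have "v > 0"
  proof (rule ccontr)
    assume "\<not> v > 0"
    then have v0: "v \<le> 0" by simp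
    moreover have "u \<ge> 0" using \<open>u + v > 0\<close> v0 by simp
    ultimately have "u * v \<le> 0" by (simp add: mult_nonneg_nonpos)
    then show False using uv by simp
  qed
  then show ?thesis unfolding v_def s_def by simp
qed

lemma alg:
  fixes x \<beta> s :: real
  assumes "s > 0" "s^2 = 1 - x" "\<beta> > 0"
    and "1 - (1 + \<beta>) * (1/2 - 1/2 * s) > 0" "1 - (1 + \<beta>) * (1/2 + 1/2 * s) > 0"
  shows "\<beta> / ((1 + \<beta>) * s) * (1 / (1 - (1 + \<beta>) * (1/2 - 1/2 * s)) - 1 / (1 - (1 + \<beta>) * (1/2 + 1/2 * s)))
     = - 1 / ((1 + \<beta>)^2 / (4 * \<beta>) * x - 1)"
proof -
  define u where "u = 1 - (1 + \<beta>) * (1/2 - 1/2 * s)"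
  define v where "v = 1 - (1 + \<beta>) * (1/2 + 1/2 * s)"
  have xs: "x = 1 - s * s" using assms(2) by (simp add: power2_eq_square)
  have uv: "u * v = (1 + \<beta>)^2 * x / 4 - \<beta>" unfolding u_def v_def xs
    by (simp add: field_simps power2_eq_square) algebra?
  have d: "u - v = (1 + \<beta>) * s" unfolding u_def v_def by (simp add: algebra_simps)
  have u0: "u > 0" "v > 0" using assms u_def v_def by auto
  have "\<beta> / ((1 + \<beta>) * s) * (1 / u - 1 / v) = \<beta> / ((1 + \<beta>) * s) * (- (u - v) / (u * v))"
    using u0 by (simp add: field_simps)
  also have "\<dots> = - \<beta> / (u * v)"
  proof -
    have c: "(1 + \<beta>) * s \<noteq> 0" using assms by simp
    have "\<beta> / ((1 + \<beta>) * s) * (- ((1 + \<beta>) * s) / (u * v)) = - (\<beta> * ((1 + \<beta>) * s)) / (((1 + \<beta>) * s) * (u * v))"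
      by (simp add: times_divide_times_eq)
    also have "\<dots> = - \<beta> / (u * v)" using c by simp
    finally show ?thesis unfolding d .
  qed
  also have "\<dots> = - 1 / ((1 + \<beta>)^2 / (4 * \<beta>) * x - 1)"
    unfolding uv using assms u0 uv by (simp add: field_simps)
  finally show ?thesis unfolding u_def v_def .
qed

lemma SS_nonneg: "0 \<le> q \<Longrightarrow> q < 1 \<Longrightarrow> 0 \<le> SS q"
  unfolding SS_def by (intro suminf_nonneg summ_poly) auto

theorem corollary2:
  fixes K :: "(real \<times> real) set"
  assumes "compact K"
    and "K \<subseteq> {(x, \<beta>). 0 \<le> x \<and> x < 1 \<and> 0 < \<beta> \<and> \<beta> < 1 \<and>
                         (1 + \<beta>)^2 * x / (4 * \<beta>) > 1}"
  shows "uniform_limit K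
    (\<lambda>t (x, \<beta>). \<beta> / ((1 + \<beta>) * sqrt (1 - x)) *
       (hyp2F1 1 ((1 + \<beta>) * t) (t + 1) (1/2 - 1/2 * sqrt (1 - x))
        - hyp2F1 1 ((1 + \<beta>) * t) (t + 1) (1/2 + 1/2 * sqrt (1 - x))))
    (\<lambda>(x, \<beta>). - 1 / ((1 + \<beta>)^2 / (4 * \<beta>) * x - 1))
    (at_top :: real filter)"
proof -
  have Kp: "0 \<le> x \<and> x < 1 \<and> 0 < \<beta> \<and> \<beta> < 1 \<and> (1 + \<beta>)^2 * x / (4 * \<beta>) > 1"
    if "(x, \<beta>) \<in> K" for x \<beta> using assms(2) that by auto
  obtain q where q1: "q < 1"
    and qK: "\<forall>p\<in>K. (1 + snd p) * (1/2 + 1/2 * sqrt (1 - fst p)) \<le> q"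
  proof -
    have "\<exists>q<1. \<forall>p\<in>K. (1 + snd p) * (1/2 + 1/2 * sqrt (1 - fst p)) \<le> q"
    proof (rule compact_bound[OF assms(1)])
      show "continuous_on K (\<lambda>p. (1 + snd p) * (1/2 + 1/2 * sqrt (1 - fst p)))"
        by (intro continuous_intros)
      show "(1 + snd p) * (1/2 + 1/2 * sqrt (1 - fst p)) < 1" if "p \<in> K" for p
        using zp_lt[of "fst p" "snd p"] Kp[of "fst p" "snd p"] that by auto
    qed
    then show ?thesis using that by blast
  qed
  obtain xm where xm1: "xm < 1" and xmK: "\<forall>p\<in>K. fst p \<le> xm"
  proof -
    have "\<exists>q<1. \<forall>p\<in>K. fst p \<le> q"
      using Kp by (intro compact_bound[OF assms(1)] continuous_intros) (metis prod.collapse)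
    then show ?thesis using that by blast
  qed
  define M where "M = 1 / sqrt (1 - xm)"
  have M0: "M > 0" unfolding M_def using xm1 by simp
  show ?thesis
  proof (cases "K = {}")
    case True then show ?thesis by (simp add: uniform_limit_iff)
  next
    case False
    then obtain p0 where "p0 \<in> K" by blast
    then have p0: "fst p0 < 1" "0 < snd p0" using Kp[of "fst p0" "snd p0"] by auto
    have "0 \<le> (1 + snd p0) * (1/2 + 1/2 * sqrt (1 - fst p0))" using p0
      by (intro mult_nonneg_nonneg add_nonneg_nonneg) auto
    then have q0: "0 \<le> q" using qK \<open>p0 \<in> K\<close> by fastforce
    define C where "C = M * (2 * SS q)"
    have C0: "C \<ge> 0" unfolding C_def using M0 SS_nonneg[OF q0 q1] by simp
    have main: "dist (\<beta> / ((1 + \<beta>) * sqrt (1 - x)) *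
       (hyp2F1 1 ((1 + \<beta>) * t) (t + 1) (1/2 - 1/2 * sqrt (1 - x))
        - hyp2F1 1 ((1 + \<beta>) * t) (t + 1) (1/2 + 1/2 * sqrt (1 - x))))
      (- 1 / ((1 + \<beta>)^2 / (4 * \<beta>) * x - 1)) \<le> C / t"
      if t: "t > 0" and xb: "(x, \<beta>) \<in> K" for t x \<beta>
    proof -
      note P = Kp[OF xb]
      define s where "s = sqrt (1 - x)"
      have s0: "s > 0" "s \<le> 1" unfolding s_def using P by auto
      have s2: "s^2 = 1 - x" unfolding s_def using P by simp
      define b where "b = 1 + \<beta>"
      have b1: "b \<ge> 1" unfolding b_def using P by simp
      have bzp: "b * (1/2 + 1/2 * s) \<le> q" using qK xb unfolding b_def s_def by force
      have "b * (1/2 - 1/2 * s) \<le> b * (1/2 + 1/2 * s)" using b1 s0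
        by (intro mult_left_mono) auto
      then have bzm: "b * (1/2 - 1/2 * s) \<le> q" using bzp by linarith
      define Fm where "Fm = hyp2F1 1 (b * t) (t + 1) (1/2 - 1/2 * s)"
      define Fp where "Fp = hyp2F1 1 (b * t) (t + 1) (1/2 + 1/2 * s)"
      define Gm where "Gm = 1 / (1 - b * (1/2 - 1/2 * s))"
      define Gp where "Gp = 1 / (1 - b * (1/2 + 1/2 * s))"
      have em: "\<bar>Fm - Gm\<bar> \<le> SS q / t" unfolding Fm_def Gm_def
        using F_bound[OF t b1 _ bzm q1] s0 by simp
      have ep: "\<bar>Fp - Gp\<bar> \<le> SS q / t" unfolding Fp_def Gp_def
        using F_bound[OF t b1 _ bzp q1] s0 by simp
      define A where "A = \<beta> / (b * s)"
      have A0: "A \<ge> 0" unfolding A_def using P s0 b1 by simp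
      have AM: "A \<le> M"
      proof -
        have "A = (\<beta> / (1 + \<beta>)) * (1 / s)" unfolding A_def b_def by simp
        also have "\<dots> \<le> 1 * (1 / s)" using P s0 by (intro mult_right_mono) auto
        finally have "A \<le> 1 / s" by simp
        also have "\<dots> \<le> M" unfolding M_def s_def using xmK xb xm1 P
          by (intro divide_left_mono real_sqrt_le_mono mult_pos_pos) auto
        finally show ?thesis .
      qed
      have rhs: "- 1 / ((1 + \<beta>)^2 / (4 * \<beta>) * x - 1) = A * (Gm - Gp)"
        unfolding A_def Gm_def Gp_def b_def
        using alg[of s x \<beta>] s0 s2 P bzm bzp q1 b_def by simp
      have "dist (A * (Fm - Fp)) (A * (Gm - Gp)) = A * \<bar>(Fm - Gm) - (Fp - Gp)\<bar>"
      proof -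
        have "A * (Fm - Fp) - A * (Gm - Gp) = A * ((Fm - Gm) - (Fp - Gp))" by (simp add: algebra_simps)
        then show ?thesis using A0 by (simp add: dist_real_def abs_mult)
      qed
      also have "\<dots> \<le> M * (SS q / t + SS q / t)"
        using em ep A0 AM SS_nonneg[OF q0 q1] t
        by (intro mult_mono) (auto simp: abs_diff_le_iff abs_le_iff)
      also have "\<dots> = C / t" unfolding C_def by simp
      finally show ?thesis unfolding rhs A_def Fm_def Fp_def s_def b_def by simp
    qed
    show ?thesis
    proof (rule uniform_limitI)
      fix e :: real assume e: "e > 0"
      have "\<forall>\<^sub>F t in at_top. t > 0 \<and> t > C / e"
        by (intro eventually_conj eventually_gt_at_top)
      then show "\<forall>\<^sub>F t in at_top. \<forall>p\<in>K. dist ((\<lambda>t (x, \<beta>). \<beta> / ((1 + \<beta>) * sqrt (1 - x)) *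
       (hyp2F1 1 ((1 + \<beta>) * t) (t + 1) (1/2 - 1/2 * sqrt (1 - x))
        - hyp2F1 1 ((1 + \<beta>) * t) (t + 1) (1/2 + 1/2 * sqrt (1 - x)))) t p)
         ((\<lambda>(x, \<beta>). - 1 / ((1 + \<beta>)^2 / (4 * \<beta>) * x - 1)) p) < e"
      proof eventually_elim
        case (elim t)
        have Ct: "C / t < e" using elim e C0 by (simp add: field_simps)
        show ?case
        proof
          fix p assume "p \<in> K"
          then obtain x \<beta> where p: "p = (x, \<beta>)" "(x, \<beta>) \<in> K" by (cases p) auto
          show "dist ((\<lambda>t (x, \<beta>). \<beta> / ((1 + \<beta>) * sqrt (1 - x)) *
       (hyp2F1 1 ((1 + \<beta>) * t) (t + 1) (1/2 - 1/2 * sqrt (1 - x))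
        - hyp2F1 1 ((1 + \<beta>) * t) (t + 1) (1/2 + 1/2 * sqrt (1 - x)))) t p)
         ((\<lambda>(x, \<beta>). - 1 / ((1 + \<beta>)^2 / (4 * \<beta>) * x - 1)) p) < e"
            using main[of t x \<beta>] elim p Ct by simp
        qed
      qed
    qed
  qed
qed

end
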